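(* Let $X$ be a topological space. Then $(C(X),\tau_\Gamma)$ is a Baire space.
   Context: $C(X)$ is the set of continuous real-valued functions on $X$, each identified with its graph in $X\times\mathbb{R}$. The graph topology $\tau_\Gamma$ on $C(X)$ has base $\{F_G: G\text{ open in }X\times\mathbb{R}\}$ where $F_G=\{f\in C(X): f\subset G\}$. *)

theory Defs
  imports "HOL-Analysis.Analysis"
begin

definition graph_on :: "'a topology \<Rightarrow> ('a \<Rightarrow> real) \<Rightarrow> ('a \<times> real) set" where
  "graph_on X f = {(x, f x) | x. x \<in> topspace X}"

text \<open>C(X): continuous real-valued functions on X, each identified with its graph.\<close>
definition CX :: "'a topology \<Rightarrow> ('a \<times> real) set set" where
  "CX X = {graph_on X f | f. continuous_map X euclideanreal f}"

definition FG :: "'a topology \<Rightarrow> ('a \<times> real) set \<Rightarrow> ('a \<times> real) set set" where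
  "FG X G = {f \<in> CX X. f \<subseteq> G}"

definition graph_topology :: "'a topology \<Rightarrow> ('a \<times> real) set topology" where
  "graph_topology X =
     topology_generated_by {FG X G | G. openin (prod_topology X euclideanreal) G}"

definition baire_space :: "'a topology \<Rightarrow> bool" where
  "baire_space T \<longleftrightarrow>
     (\<forall>\<G>. countable \<G> \<and> (\<forall>U\<in>\<G>. openin T U \<and> T closure_of U = topspace T)
        \<longrightarrow> T closure_of (topspace T \<inter> \<Inter>\<G>) = topspace T)"

end

theory Submission
  imports Defs
begin

abbreviation PX :: "'a topology \<Rightarrow> ('a \<times> real) topology" where
  "PX X \<equiv> prod_topology X euclideanreal"

lemma graph_sub: "graph_on X f \<subseteq> G \<longleftrightarrow> (\<forall>x\<in>topspace X. (x, f x) \<in> G)"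
  by (auto simp: graph_on_def)

lemma graph_in_CX: "continuous_map X euclideanreal f \<Longrightarrow> graph_on X f \<in> CX X"
  by (auto simp: CX_def)

lemma topspace_GT: "topspace (graph_topology X) = CX X"
proof -
  have e: "FG X (topspace X \<times> UNIV) = CX X"
    by (auto simp: FG_def CX_def graph_on_def)
  have o: "openin (PX X) (topspace X \<times> UNIV)"
    by (metis openin_topspace topspace_prod_topology topspace_euclidean)
  have "\<Union>{FG X G | G. openin (PX X) G} = CX X"
  proof
    show "\<Union>{FG X G | G. openin (PX X) G} \<subseteq> CX X" by (auto simp: FG_def)
    show "CX X \<subseteq> \<Union>{FG X G | G. openin (PX X) G}" using e o by blast
  qed
  then show ?thesis unfolding graph_topology_def topology_generated_by_topspace .
qed

lemma FG_open: "openin (PX X) G \<Longrightarrow> openin (graph_topology X) (FG X G)"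
  unfolding graph_topology_def by (rule topology_generated_by_Basis) blast

lemma base:
  assumes "openin (graph_topology X) W" "h \<in> W"
  shows "\<exists>G. openin (PX X) G \<and> h \<in> FG X G \<and> FG X G \<subseteq> W"
proof -
  have "generate_topology_on {FG X G | G. openin (PX X) G} W"
    using assms(1) unfolding graph_topology_def by (rule openin_topology_generated_by)
  then have "\<forall>h\<in>W. \<exists>G. openin (PX X) G \<and> h \<in> FG X G \<and> FG X G \<subseteq> W"
  proof induct
    case Empty
    then show ?case by simp
  next
    case (Int a b)
    show ?case
    proof
      fix h assume "h \<in> a \<inter> b"
      then obtain G1 G2 where G: "openin (PX X) G1" "h \<in> FG X G1" "FG X G1 \<subseteq> a"
        "openin (PX X) G2" "h \<in> FG X G2" "FG X G2 \<subseteq> b" using Int by blast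
      then show "\<exists>G. openin (PX X) G \<and> h \<in> FG X G \<and> FG X G \<subseteq> a \<inter> b"
        apply (intro exI[of _ "G1 \<inter> G2"])
        by (auto simp: FG_def openin_Int)
    qed
  next
    case (UN K)
    show ?case
    proof
      fix h assume "h \<in> \<Union>K"
      then obtain k where k: "k \<in> K" "h \<in> k" by blast
      have "\<forall>h\<in>k. \<exists>G. openin (PX X) G \<and> h \<in> FG X G \<and> FG X G \<subseteq> k"
        using UN.hyps(2)[OF k(1)] .
      then obtain G where G: "openin (PX X) G" "h \<in> FG X G" "FG X G \<subseteq> k" using k(2) by blast
      have "FG X G \<subseteq> \<Union>K" using G(3) k(1) by blast
      then show "\<exists>G. openin (PX X) G \<and> h \<in> FG X G \<and> FG X G \<subseteq> \<Union>K" using G(1,2) by blast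
    qed
  next
    case (Basis s)
    then obtain G where G: "s = FG X G" "openin (PX X) G" by blast
    show ?case
    proof
      fix h assume "h \<in> s"
      then show "\<exists>G. openin (PX X) G \<and> h \<in> FG X G \<and> FG X G \<subseteq> s" using G by blast
    qed
  qed
  with assms(2) show ?thesis by blast
qed

lemma aux_ineq: "\<not> (B::real) \<le> 2*d \<Longrightarrow> A < d \<Longrightarrow> A \<le> B/2"
  by linarith

lemma aux_ineq2: "(B::real) \<le> B/2 \<Longrightarrow> 0 < B \<Longrightarrow> False"
  by linarith

lemma aux3: "\<bar>(a::real) - c\<bar> \<le> h \<Longrightarrow> \<bar>b - c\<bar> \<le> h \<Longrightarrow> h < e/2 \<Longrightarrow> \<bar>a - b\<bar> < e"
  unfolding abs_le_iff abs_less_iff by linarith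

lemma aux4: "(t::real) \<le> p \<Longrightarrow> p \<le> q \<Longrightarrow> q < e \<Longrightarrow> t < e"
  by linarith

lemma strip_lemma:
  fixes f :: "'a \<Rightarrow> real"
  assumes f: "continuous_map X euclideanreal f" and G: "openin (PX X) G"
    and gr: "\<forall>x\<in>topspace X. (x, f x) \<in> G" and e: "0 < e"
  shows "\<exists>H. openin (PX X) H \<and> (\<forall>x\<in>topspace X. (x, f x) \<in> H) \<and> H \<subseteq> G
     \<and> (\<forall>x y. (x,y) \<in> H \<longrightarrow> \<bar>y - f x\<bar> < e)
     \<and> (\<forall>x ys c. (\<forall>m. (x, ys m) \<in> H) \<longrightarrow> ys \<longlonglongrightarrow> c \<longrightarrow> (x,c) \<in> G)"
proof -
  define good where "good V \<delta> \<longleftrightarrow> openin X V \<and> 0 < \<delta> \<and> \<delta> \<le> e \<and>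
     (\<forall>x'\<in>V. \<forall>y'. \<bar>y' - f x'\<bar> \<le> 2*\<delta> \<longrightarrow> (x',y') \<in> G)" for V \<delta>
  define H where "H = {(x,y). \<exists>V \<delta>. good V \<delta> \<and> x \<in> V \<and> \<bar>y - f x\<bar> < \<delta>}"
  have sub: "H \<subseteq> G"
  proof
    fix p assume "p \<in> H"
    then obtain x y V \<delta> where p: "p=(x,y)" "good V \<delta>" "x\<in>V" "\<bar>y - f x\<bar> < \<delta>"
      unfolding H_def by blast
    have "\<bar>y - f x\<bar> \<le> 2*\<delta>" using p by linarith
    then show "p \<in> G" using p unfolding good_def by blast
  qed
  have stp: "\<forall>x y. (x,y) \<in> H \<longrightarrow> \<bar>y - f x\<bar> < e"
  proof (intro allI impI)
    fix x y assume "(x,y) \<in> H"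
    then obtain V \<delta> where p: "good V \<delta>" "x\<in>V" "\<bar>y - f x\<bar> < \<delta>"
      unfolding H_def by blast
    then show "\<bar>y - f x\<bar> < e" unfolding good_def by linarith
  qed
  have c1: "continuous_map (PX X) euclideanreal (f \<circ> fst)"
    by (rule continuous_map_compose[OF continuous_map_fst f])
  have cont: "continuous_map (PX X) euclideanreal (\<lambda>p. snd p - f (fst p))"
    using continuous_map_diff[OF continuous_map_snd c1] by (simp add: o_def)
  have opn: "openin (PX X) H"
  proof (subst openin_subopen, intro ballI)
    fix p assume "p \<in> H"
    then obtain x y V \<delta> where p: "p = (x,y)" and gd: "good V \<delta>" "x \<in> V" "\<bar>y - f x\<bar> < \<delta>"
      unfolding H_def by blast
    define N where "N = (V \<times> UNIV) \<inter> {q \<in> topspace (PX X). snd q - f (fst q) \<in> {-\<delta><..<\<delta>}}"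
    have "openin (PX X) N" unfolding N_def
    proof (rule openin_Int)
      show "openin (PX X) (V \<times> UNIV)" using gd(1) unfolding good_def
        by (simp add: openin_prod_Times_iff)
      show "openin (PX X) {q \<in> topspace (PX X). snd q - f (fst q) \<in> {-\<delta><..<\<delta>}}"
        by (rule openin_continuous_map_preimage[OF cont]) simp
    qed
    moreover have "p \<in> N"
      using gd openin_subset[of X V] unfolding N_def p good_def by (auto simp: abs_less_iff)
    moreover have "N \<subseteq> H"
    proof
      fix q assume "q \<in> N"
      then obtain a b where q: "q = (a,b)" "a \<in> V" "\<bar>b - f a\<bar> < \<delta>"
        unfolding N_def by (auto simp: abs_less_iff)
      then show "q \<in> H" using gd(1) unfolding H_def by blast
    qed
    ultimately show "\<exists>T. openin (PX X) T \<and> p \<in> T \<and> T \<subseteq> H" by blast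
  qed
  have gr': "\<forall>x\<in>topspace X. (x, f x) \<in> H"
  proof
    fix x assume x: "x \<in> topspace X"
    from gr x have "(x, f x) \<in> G" ..
    with G obtain U W where UW: "openin X U" "openin euclideanreal W" "x \<in> U" "f x \<in> W" "U \<times> W \<subseteq> G"
      by (metis openin_prod_topology_alt)
    from UW(2,4) obtain r where r: "r > 0" "ball (f x) r \<subseteq> W"
      using open_contains_ball by (metis open_openin)
    define V where "V = U \<inter> {x' \<in> topspace X. f x' \<in> ball (f x) (r/2)}"
    define \<delta> where "\<delta> = min (r/8) e"
    have oV: "openin X V" unfolding V_def
      using UW(1) openin_continuous_map_preimage[OF f, of "ball (f x) (r/2)"]
      by (simp add: openin_Int open_openin[symmetric])
    have "good V \<delta>" unfolding good_def
    proof (intro conjI ballI allI impI)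
      show "openin X V" by (rule oV)
      show "0 < \<delta>" using r e by (simp add: \<delta>_def)
      show "\<delta> \<le> e" by (simp add: \<delta>_def)
      fix x' y' assume x': "x' \<in> V" and y': "\<bar>y' - f x'\<bar> \<le> 2*\<delta>"
      have "\<bar>f x' - f x\<bar> < r/2" using x' by (auto simp: V_def dist_real_def abs_minus_commute)
      moreover have "2*\<delta> \<le> r/4" by (simp add: \<delta>_def)
      ultimately have "\<bar>f x - y'\<bar> < r" using y' by linarith
      then have "y' \<in> ball (f x) r" by (simp add: dist_real_def)
      then show "(x',y') \<in> G" using r UW x' V_def by blast
    qed
    moreover have "x \<in> V" using x UW r by (simp add: V_def)
    moreover have "\<bar>f x - f x\<bar> < \<delta>" using r e by (simp add: \<delta>_def)
    ultimately show "(x, f x) \<in> H" unfolding H_def by blast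
  qed
  have clos: "\<forall>x ys c. (\<forall>m. (x, ys m) \<in> H) \<longrightarrow> ys \<longlonglongrightarrow> c \<longrightarrow> (x,c) \<in> G"
  proof (intro allI impI)
    fix x ys c assume Hm: "\<forall>m. (x, ys m) \<in> H" and lim: "ys \<longlonglongrightarrow> c"
    show "(x,c) \<in> G"
    proof (rule ccontr)
      assume nc: "(x,c) \<notin> G"
      have b: "\<bar>ys m - f x\<bar> \<le> \<bar>c - f x\<bar> / 2 \<and> 0 < \<bar>c - f x\<bar>" for m
      proof -
        obtain V \<delta> where gd: "good V \<delta>" "x \<in> V" "\<bar>ys m - f x\<bar> < \<delta>"
          using Hm unfolding H_def by blast
        have n2: "\<not> \<bar>c - f x\<bar> \<le> 2*\<delta>" using gd nc unfolding good_def by blast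
        have d0: "0 < \<delta>" using gd(1) unfolding good_def by blast
        have "\<bar>ys m - f x\<bar> \<le> \<bar>c - f x\<bar> / 2" using aux_ineq[OF n2 gd(3)] .
        moreover have "0 < \<bar>c - f x\<bar>" using n2 d0 by linarith
        ultimately show ?thesis by blast
      qed
      have "(\<lambda>m. \<bar>ys m - f x\<bar>) \<longlonglongrightarrow> \<bar>c - f x\<bar>" by (intro tendsto_intros lim)
      then have "\<bar>c - f x\<bar> \<le> \<bar>c - f x\<bar> / 2" by (rule LIMSEQ_le_const2) (use b in blast)
      from aux_ineq2[OF this conjunct2[OF b[of 0]]] show False .
    qed
  qed
  show ?thesis using opn gr' sub stp clos by blast
qed

lemma main_lemma:
  fixes U :: "nat \<Rightarrow> ('a \<times> real) set set"
  assumes Uo: "\<forall>n. openin (graph_topology X) (U n)"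
    and Ud: "\<forall>n T. openin (graph_topology X) T \<and> T \<noteq> {} \<longrightarrow> U n \<inter> T \<noteq> {}"
    and Wo: "openin (graph_topology X) W" and Wne: "W \<noteq> {}"
  shows "\<exists>h. h \<in> W \<and> (\<forall>n. h \<in> U n)"
proof -
  define U' where "U' n = (case n of 0 \<Rightarrow> W | Suc k \<Rightarrow> U k)" for n
  define inv where "inv n p \<longleftrightarrow> continuous_map X euclideanreal (fst p) \<and> openin (PX X) (snd p)
     \<and> (\<forall>x\<in>topspace X. (x, fst p x) \<in> snd p) \<and> FG X (snd p) \<subseteq> U' n"
    for n and p :: "('a \<Rightarrow> real) \<times> ('a \<times> real) set"
  define Q where "Q n p q \<longleftrightarrow> snd q \<subseteq> snd p \<and> (\<forall>x y. (x,y) \<in> snd q \<longrightarrow> \<bar>y - fst p x\<bar> < (1/2)^n)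
     \<and> (\<forall>x ys c. (\<forall>m. (x, ys m) \<in> snd q) \<longrightarrow> ys \<longlonglongrightarrow> c \<longrightarrow> (x,c) \<in> snd p)"
    for n and p q :: "('a \<Rightarrow> real) \<times> ('a \<times> real) set"
  have init: "\<exists>p. inv 0 p"
  proof -
    obtain h where hW: "h \<in> W" using Wne by blast
    obtain G where G: "openin (PX X) G" "h \<in> FG X G" "FG X G \<subseteq> W"
      using base[OF Wo hW] by (elim exE conjE) (rule that)
    have "h \<in> CX X" using G(2) by (simp add: FG_def)
    then obtain f where f: "continuous_map X euclideanreal f" "h = graph_on X f"
      unfolding CX_def by blast
    have "\<forall>x\<in>topspace X. (x, f x) \<in> G" using G(2) f(2) by (simp add: FG_def graph_sub)
    then have "inv 0 (f,G)" using G f by (simp add: inv_def U'_def)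
    then show ?thesis ..
  qed
  have step: "\<exists>q. inv (Suc n) q \<and> Q n p q" if "inv n p" for n p
  proof -
    obtain f G where p: "p = (f,G)" by (cases p)
    with that have f: "continuous_map X euclideanreal f" and G: "openin (PX X) G"
      and gr: "\<forall>x\<in>topspace X. (x, f x) \<in> G" by (auto simp: inv_def)
    have hp: "(0::real) < (1/2)^n" by simp
    obtain H where H: "openin (PX X) H" "\<forall>x\<in>topspace X. (x, f x) \<in> H" "H \<subseteq> G"
      "\<forall>x y. (x,y) \<in> H \<longrightarrow> \<bar>y - f x\<bar> < (1/2)^n"
      "\<forall>x ys c. (\<forall>m. (x, ys m) \<in> H) \<longrightarrow> ys \<longlonglongrightarrow> c \<longrightarrow> (x,c) \<in> G"
      using strip_lemma[OF f G gr hp] by (elim exE conjE) (rule that)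
    have Ho: "openin (graph_topology X) (FG X H)" by (rule FG_open[OF H(1)])
    have "graph_on X f \<in> FG X H" using f H(2) by (simp add: FG_def graph_in_CX graph_sub)
    then have ne: "FG X H \<noteq> {}" by blast
    have "U n \<inter> FG X H \<noteq> {}" using Ud[rule_format, of "FG X H" n] Ho ne by simp
    then obtain h where h: "h \<in> U n \<inter> FG X H" by blast
    have o: "openin (graph_topology X) (U n \<inter> FG X H)" using Uo Ho by (simp add: openin_Int)
    obtain G'' where G'': "openin (PX X) G''" "h \<in> FG X G''" "FG X G'' \<subseteq> U n \<inter> FG X H"
      using base[OF o h] by (elim exE conjE) (rule that)
    have "h \<in> CX X" using G''(2) by (simp add: FG_def)
    then obtain f' where f': "continuous_map X euclideanreal f'" "h = graph_on X f'"
      unfolding CX_def by blast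
    have g1: "\<forall>x\<in>topspace X. (x, f' x) \<in> G''" using G''(2) f'(2) by (simp add: FG_def graph_sub)
    have g2: "\<forall>x\<in>topspace X. (x, f' x) \<in> H" using h f'(2) by (simp add: FG_def graph_sub)
    have "FG X (G'' \<inter> H) \<subseteq> FG X G''" by (auto simp: FG_def)
    then have "FG X (G'' \<inter> H) \<subseteq> U n" using G''(3) by blast
    then have "FG X (G'' \<inter> H) \<subseteq> U' (Suc n)" by (simp add: U'_def)
    then have "inv (Suc n) (f', G'' \<inter> H)"
      using f'(1) G''(1) H(1) g1 g2 by (simp add: inv_def openin_Int)
    moreover have "Q n p (f', G'' \<inter> H)" unfolding Q_def p fst_conv snd_conv
    proof (intro conjI allI impI)
      show "G'' \<inter> H \<subseteq> G" using H(3) by blast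
      fix x y assume "(x, y) \<in> G'' \<inter> H"
      then show "\<bar>y - f x\<bar> < (1/2)^n" using H(4) by blast
    next
      fix x ys c assume "\<forall>m. (x, ys m) \<in> G'' \<inter> H" "ys \<longlonglongrightarrow> c"
      then show "(x, c) \<in> G" using H(5) by blast
    qed
    ultimately show ?thesis by blast
  qed
  obtain s where s: "\<forall>n. inv n (s n) \<and> Q n (s n) (s (Suc n))"
    using dependent_nat_choice[of inv Q, OF init step] by blast
  define f where "f n = fst (s n)" for n
  define G where "G n = snd (s n)" for n
  have fc: "continuous_map X euclideanreal (f n)" for n using s by (simp add: inv_def f_def)
  have FGn: "FG X (G n) \<subseteq> U' n" for n using s by (simp add: inv_def G_def)
  have grn: "x \<in> topspace X \<Longrightarrow> (x, f n x) \<in> G n" for n x using s by (simp add: inv_def f_def G_def)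
  have dec: "G (Suc n) \<subseteq> G n" for n using s by (simp add: Q_def G_def)
  have Gmono: "n \<le> m \<Longrightarrow> G m \<subseteq> G n" for n m
    using decseqD[OF decseq_SucI[of G, OF dec]] by blast
  have stripn: "(x,y) \<in> G (Suc n) \<Longrightarrow> \<bar>y - f n x\<bar> < (1/2)^n" for x y n
    using s by (simp add: Q_def G_def f_def)
  have closn: "(\<forall>m. (x, ys m) \<in> G (Suc n)) \<Longrightarrow> ys \<longlonglongrightarrow> c \<Longrightarrow> (x,c) \<in> G n" for x ys c n
    using s by (simp add: Q_def G_def)
  have bnd: "\<bar>f m x - f n x\<bar> \<le> (1/2)^n" if "n \<le> m" "x \<in> topspace X" for n m x
  proof (cases "n = m")
    case True then show ?thesis by simp
  next
    case False
    then have "Suc n \<le> m" using that by simp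
    then have "(x, f m x) \<in> G (Suc n)" using Gmono grn that(2) by blast
    then show ?thesis using stripn less_imp_le by blast
  qed
  have conv: "(\<lambda>n. f n x) \<longlonglongrightarrow> lim (\<lambda>n. f n x)" if x: "x \<in> topspace X" for x
  proof -
    have "Cauchy (\<lambda>n. f n x)"
    proof (rule metric_CauchyI)
      fix e :: real assume "0 < e"
      then obtain M where M: "(1/2::real)^M < e/2" using real_arch_pow_inv[of "e/2" "1/2::real"] by auto
      have "\<forall>m\<ge>M. \<forall>n\<ge>M. dist (f m x) (f n x) < e"
      proof (intro allI impI)
        fix m n assume "M \<le> m" "M \<le> n"
        then have "\<bar>f m x - f M x\<bar> \<le> (1/2)^M" "\<bar>f n x - f M x\<bar> \<le> (1/2)^M" using bnd x by auto
        then show "dist (f m x) (f n x) < e" using aux3[OF _ _ M] by (simp add: dist_real_def)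
      qed
      then show "\<exists>M. \<forall>m\<ge>M. \<forall>n\<ge>M. dist (f m x) (f n x) < e" by blast
    qed
    then show ?thesis by (simp add: Cauchy_convergent_iff convergent_LIMSEQ_iff)
  qed
  define g where "g x = lim (\<lambda>n. f n x)" for x
  have gb: "\<bar>g x - f n x\<bar> \<le> (1/2)^n" if x: "x \<in> topspace X" for x n
  proof -
    have "(\<lambda>m. \<bar>f m x - f n x\<bar>) \<longlonglongrightarrow> \<bar>g x - f n x\<bar>"
      unfolding g_def by (intro tendsto_intros conv[OF x])
    then show ?thesis by (rule LIMSEQ_le_const2) (use bnd x in blast)
  qed
  have gc: "continuous_map X euclideanreal g"
  proof -
    have "continuous_map X Met_TC.mtopology g"
    proof (rule Met_TC.continuous_map_uniform_limit[where F=sequentially and f=f])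
      show "\<forall>\<^sub>F n in sequentially. continuous_map X Met_TC.mtopology (f n)"
        using fc by simp
      show "sequentially \<noteq> bot" by simp
      fix e :: real assume "0 < e"
      then obtain N where N: "(1/2::real)^N < e" using real_arch_pow_inv[of e "1/2::real"] by auto
      show "\<forall>\<^sub>F n in sequentially. \<forall>x\<in>topspace X. g x \<in> UNIV \<and> dist (f n x) (g x) < e"
      proof (rule eventually_sequentiallyI[of N])
        fix n assume "N \<le> n"
        then have "(1/2::real)^n \<le> (1/2)^N" by (simp add: power_decreasing)
        show "\<forall>x\<in>topspace X. g x \<in> UNIV \<and> dist (f n x) (g x) < e"
        proof (intro ballI conjI)
          fix x assume x: "x \<in> topspace X"
          show "g x \<in> UNIV" by simp
          have d: "dist (f n x) (g x) = \<bar>g x - f n x\<bar>" by (simp add: dist_real_def abs_minus_commute)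
          show "dist (f n x) (g x) < e"
            unfolding d by (rule aux4[OF gb[OF x, of n] \<open>(1/2::real)^n \<le> (1/2)^N\<close> N])
        qed
      qed
    qed
    then show ?thesis by simp
  qed
  have ging: "(x, g x) \<in> G n" if x: "x \<in> topspace X" for x n
  proof (rule closn)
    show "\<forall>m. (x, f (m + Suc n) x) \<in> G (Suc n)" using Gmono grn x by (meson le_add2 subsetD)
    show "(\<lambda>m. f (m + Suc n) x) \<longlonglongrightarrow> g x"
      unfolding g_def using LIMSEQ_ignore_initial_segment[OF conv[OF x], of "Suc n"] .
  qed
  have "graph_on X g \<in> U' n" for n
  proof -
    have "graph_on X g \<in> FG X (G n)"
      using gc ging unfolding FG_def graph_sub[symmetric] by (simp add: graph_in_CX graph_sub)
    then show ?thesis using FGn[of n] by blast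
  qed
  moreover have "U' 0 = W" "U' (Suc n) = U n" for n by (simp_all add: U'_def)
  ultimately have "graph_on X g \<in> W \<and> (\<forall>n. graph_on X g \<in> U n)" by (metis (no_types))
  then show ?thesis by blast
qed

theorem proposition2p3:
  fixes X :: "'a topology"
  shows "baire_space (graph_topology X)"
  unfolding baire_space_def
proof (intro allI impI)
  fix \<G> assume A: "countable \<G> \<and> (\<forall>U\<in>\<G>. openin (graph_topology X) U \<and>
      graph_topology X closure_of U = topspace (graph_topology X))"
  show "graph_topology X closure_of (topspace (graph_topology X) \<inter> \<Inter>\<G>) = topspace (graph_topology X)"
  proof (cases "\<G> = {}")
    case True then show ?thesis by simp
  next
    case False
    define U where "U = from_nat_into \<G>"
    have UG: "range U = \<G>" using range_from_nat_into[OF False] A by (simp add: U_def)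
    have UinG: "U n \<in> \<G>" for n using UG by blast
    have Uo: "\<forall>n. openin (graph_topology X) (U n)"
    proof
      fix n show "openin (graph_topology X) (U n)" using A UinG[of n] by simp
    qed
    have Ud: "\<forall>n T. openin (graph_topology X) T \<and> T \<noteq> {} \<longrightarrow> U n \<inter> T \<noteq> {}"
    proof (intro allI impI)
      fix n T assume T: "openin (graph_topology X) T \<and> T \<noteq> {}"
      have "graph_topology X closure_of U n = topspace (graph_topology X)"
        using A UinG[of n] by simp
      then show "U n \<inter> T \<noteq> {}" using T unfolding dense_intersects_open by simp
    qed
    show ?thesis unfolding dense_intersects_open
    proof (intro allI impI)
      fix W assume W: "openin (graph_topology X) W \<and> W \<noteq> {}"
      then obtain h where h: "h \<in> W" "\<forall>n. h \<in> U n" using main_lemma[OF Uo Ud] by blast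
      have "h \<in> topspace (graph_topology X)" using h(1) W openin_subset by blast
      moreover have "h \<in> \<Inter>\<G>" using h(2) UG by blast
      ultimately show "(topspace (graph_topology X) \<inter> \<Inter>\<G>) \<inter> W \<noteq> {}" using h(1) by blast
    qed
  qed
qed

end
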